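(* Let $\varphi(s,v)=\vec c(s)+v\vec q(s)$ be a developable timelike ruled surface of type $M^1_-$ in $\mathbb{R}^3_1$ and let the timelike ruled surface $\varphi^*(s,v)=\vec c(s)+R\vec a(s)+v\vec q^*(s)$ of type $M^1_+$ or $M^1_-$ be a Mannheim offset of $\varphi$, with $\theta$ the angle between $\vec q$ and $\vec q^*$. Let $\varphi_{h^*}$ and $\varphi_{a^*}$ be the trajectory ruled surfaces generated by $\vec h^*$ and $\vec a^*$. Then (a) $\varphi_{h^*}$ is nondevelopable; (b) $\varphi_{a^*}$ is developable if and only if $\sinh\theta+R\frac{ds_1}{ds}\kappa\cosh\theta=0$ when $\varphi^*$ is of type $M^1_+$, respectively $\cosh\theta+R\frac{ds_1}{ds}\kappa\sinh\theta=0$ when $\varphi^*$ is of type $M^1_-$.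
   Context: Work in Minkowski 3-space $\mathbb{R}^3_1$ with $\langle x,y\rangle=-x_1y_1+x_2y_2+x_3y_3$, $\|x\|=\sqrt{|\langle x,x\rangle|}$, and Lorentzian cross product $x\times y=(x_2y_3-x_3y_2,\,x_1y_3-x_3y_1,\,x_2y_1-x_1y_2)$. A ruled surface is $\varphi(s,v)=\vec c(s)+v\vec q(s)$ with $\vec q$ a unit non-null vector field, $\langle\vec q,\vec q\rangle=\varepsilon_2\in\{\pm1\}$, $d\vec q/ds$ non-null, $\vec c$ the striction curve ($\langle d\vec q/ds,d\vec c/ds\rangle=0$) and $s$ the arc length of $\vec c$. Its Frenet frame $\{\vec q,\vec h,\vec a\}$ has central normal $\vec h=\frac{d\vec q/ds}{\|d\vec q/ds\|}$ and asymptotic normal $\vec a=\frac{(d\vec q/ds)\times\vec q}{\|d\vec q/ds\|}$. Type $M^1_-$: $\vec q$ timelike, $\vec h$ spacelike; type $M^1_+$: $\vec q$, $\vec h$ spacelike. Let $s_1$ be the arc length of the spherical image of $\vec q$ and $\kappa$ the conical curvature of the directing cone, so that for these types $d\vec q/ds_1=\vec h$, $d\vec h/ds_1=-\varepsilon_2\vec q+\kappa\vec a$, $d\vec a/ds_1=\varepsilon_2\kappa\vec h$. A ruled surface $\psi(s,v)=\vec b(s)+v\vec e(s)$ has distribution parameter $\det(d\vec b/ds,\vec e,d\vec e/ds)/\langle d\vec e/ds,d\vec e/ds\rangle$ and is developable iff it vanishes identically. A ruled surface $\varphi^*(s,v)=\vec c^*(s)+v\vec q^*(s)$ with Frenet frame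 $\{\vec q^*,\vec h^*,\vec a^*\}$ is a Mannheim offset of $\varphi$ if its rulings correspond one-to-one with those of $\varphi$ and $\vec h^*=\vec a$; then $\vec c^*=\vec c+R\vec a$ with $R$ constant since $\varphi$ is developable. With $\theta$ the angle between $\vec q$ and $\vec q^*$: if $\varphi^*$ is of type $M^1_+$, $\vec q^*=\sinh\theta\,\vec q+\cosh\theta\,\vec h$, $\vec a^*=\cosh\theta\,\vec q+\sinh\theta\,\vec h$; if of type $M^1_-$, $\vec q^*=\cosh\theta\,\vec q+\sinh\theta\,\vec h$, $\vec a^*=\sinh\theta\,\vec q+\cosh\theta\,\vec h$. The trajectory ruled surfaces are $\varphi_{h^*}(s,v)=\vec c^*(s)+v\vec h^*(s)$ and $\varphi_{a^*}(s,v)=\vec c^*(s)+v\vec a^*(s)$. *)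

theory Defs
  imports "HOL-Analysis.Analysis"
begin

definition minner :: "real^3 \<Rightarrow> real^3 \<Rightarrow> real" where
  "minner x y = - x$1 * y$1 + x$2 * y$2 + x$3 * y$3"

definition mnorm :: "real^3 \<Rightarrow> real" where
  "mnorm x = sqrt \<bar>minner x x\<bar>"

definition lcross :: "real^3 \<Rightarrow> real^3 \<Rightarrow> real^3" where
  "lcross x y = vector [x$2 * y$3 - x$3 * y$2, x$1 * y$3 - x$3 * y$1, x$2 * y$1 - x$1 * y$2]"

definition det3 :: "real^3 \<Rightarrow> real^3 \<Rightarrow> real^3 \<Rightarrow> real" where
  "det3 x y z = det (vector [x, y, z] :: real^3^3)"

text \<open>Distribution parameter of psi(s,v) = b(s) + v e(s) at s.\<close>
definition dparam :: "(real \<Rightarrow> real^3) \<Rightarrow> (real \<Rightarrow> real^3) \<Rightarrow> real \<Rightarrow> real" where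
  "dparam b e s =
     det3 (vector_derivative b (at s)) (e s) (vector_derivative e (at s)) /
     minner (vector_derivative e (at s)) (vector_derivative e (at s))"

definition developable_on :: "real set \<Rightarrow> (real \<Rightarrow> real^3) \<Rightarrow> (real \<Rightarrow> real^3) \<Rightarrow> bool" where
  "developable_on I b e \<longleftrightarrow> (\<forall>s\<in>I. dparam b e s = 0)"

text \<open>Standing setup: q unit non-null, dq/ds non-null, c striction curve, s arc length of c.\<close>
definition ruled_surface :: "real set \<Rightarrow> (real \<Rightarrow> real^3) \<Rightarrow> (real \<Rightarrow> real^3) \<Rightarrow> bool" where
  "ruled_surface I c q \<longleftrightarrow> (\<forall>s\<in>I.
      c differentiable (at s) \<and> q differentiable (at s) \<and>
      \<bar>minner (q s) (q s)\<bar> = 1 \<and>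
      minner (vector_derivative q (at s)) (vector_derivative q (at s)) \<noteq> 0 \<and>
      minner (vector_derivative q (at s)) (vector_derivative c (at s)) = 0 \<and>
      mnorm (vector_derivative c (at s)) = 1)"

definition central_normal :: "(real \<Rightarrow> real^3) \<Rightarrow> real \<Rightarrow> real^3" where
  "central_normal q s = (1 / mnorm (vector_derivative q (at s))) *\<^sub>R vector_derivative q (at s)"

definition asymptotic_normal :: "(real \<Rightarrow> real^3) \<Rightarrow> real \<Rightarrow> real^3" where
  "asymptotic_normal q s =
     (1 / mnorm (vector_derivative q (at s))) *\<^sub>R lcross (vector_derivative q (at s)) (q s)"

definition type_M1_minus :: "real set \<Rightarrow> (real \<Rightarrow> real^3) \<Rightarrow> (real \<Rightarrow> real^3) \<Rightarrow> bool" where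
  "type_M1_minus I c q \<longleftrightarrow> ruled_surface I c q \<and>
     (\<forall>s\<in>I. minner (q s) (q s) = -1 \<and> minner (central_normal q s) (central_normal q s) > 0)"

end

theory Submission
  imports Defs
begin



lemma det3_formula: "det3 x y z = x$1*(y$2*z$3 - y$3*z$2) - x$2*(y$1*z$3-y$3*z$1) + x$3*(y$1*z$2-y$2*z$1)"
  unfolding det3_def det_3 by (simp add: algebra_simps)

lemma lcross_comp: "lcross x y $ 1 = x$2 * y$3 - x$3 * y$2" "lcross x y $ 2 = x$1 * y$3 - x$3 * y$1"
  "lcross x y $ 3 = x$2 * y$1 - x$1 * y$2"
  unfolding lcross_def by simp_all

lemma vec3_eq: "(x::real^3) = y \<longleftrightarrow> x$1 = y$1 \<and> x$2 = y$2 \<and> x$3 = y$3"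
  by (metis (mono_tags, lifting) exhaust_3 vec_eq_iff)

lemma frame:
  assumes "minner Q Q = -1" "minner H H = 1" "minner Q H = 0"
  shows "minner (lcross H Q) (lcross H Q) = 1" "minner (lcross H Q) Q = 0" "minner (lcross H Q) H = 0"
    "det3 Q H (lcross H Q) = 1"
  using assms unfolding minner_def lcross_comp det3_formula by algebra+

lemma expand:
  assumes "minner Q Q = -1" "minner H H = 1" "minner Q H = 0"
  shows "X = (- minner X Q) *\<^sub>R Q + minner X H *\<^sub>R H + minner X (lcross H Q) *\<^sub>R lcross H Q"
  using assms unfolding vec3_eq minner_def by (simp add: lcross_comp; algebra)

lemma det3_lin: "det3 (a1 *\<^sub>R Q + b1 *\<^sub>R H + c1 *\<^sub>R A) (a2 *\<^sub>R Q + b2 *\<^sub>R H + c2 *\<^sub>R A) (a3 *\<^sub>R Q + b3 *\<^sub>R H + c3 *\<^sub>R A)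
  = (a1*(b2*c3 - c2*b3) - b1*(a2*c3 - c2*a3) + c1*(a2*b3-b2*a3)) * det3 Q H A"
  unfolding det3_formula by simp algebra

lemma minner_scaleR [simp]: "minner (a *\<^sub>R x) y = a * minner x y" "minner x (a *\<^sub>R y) = a * minner x y"
  unfolding minner_def by (simp_all add: algebra_simps)

lemma minner_neg [simp]: "minner (- x) y = - minner x y" "minner x (- y) = - minner x y"
  unfolding minner_def by (simp_all add: algebra_simps)

lemma minner_sym: "minner x y = minner y x"
  unfolding minner_def by (simp add: algebra_simps)

lemma lcross_scaleR: "lcross (a *\<^sub>R x) y = a *\<^sub>R lcross x y"
  unfolding vec3_eq by (simp add: lcross_comp algebra_simps)

lemma gram:
  assumes "minner Q Q = -1" "minner H H = 1" "minner Q H = 0"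
    "minner A A = 1" "minner A Q = 0" "minner A H = 0"
  shows "minner (a *\<^sub>R Q + b *\<^sub>R H + c *\<^sub>R A) Q = - a"
    "minner (a *\<^sub>R Q + b *\<^sub>R H + c *\<^sub>R A) H = b"
    "minner (a *\<^sub>R Q + b *\<^sub>R H + c *\<^sub>R A) A = c"
  using assms unfolding minner_def apply simp_all by algebra+

lemma comp_deriv:
  assumes "(q has_vector_derivative P) (at s)"
  shows "((\<lambda>t. q t $ i) has_real_derivative P $ i) (at s)"
  using bounded_linear.has_vector_derivative[OF bounded_linear_vec_nth assms, of i]
  unfolding has_real_derivative_iff_has_vector_derivative .

lemma minner_deriv:
  assumes "(q has_vector_derivative P) (at s)"
  shows "((\<lambda>t. minner (q t) (q t)) has_real_derivative 2 * minner (q s) P) (at s)"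
proof -
  have d: "\<And>i. ((\<lambda>t. q t $ i) has_real_derivative P $ i) (at s)" using comp_deriv[OF assms] .
  show ?thesis unfolding minner_def
    by (rule derivative_eq_intros d refl | simp add: algebra_simps)+
qed

lemma comb_deriv:
  assumes q: "(q has_vector_derivative P) (at s)" and h: "(h has_vector_derivative H') (at s)"
    and th: "(\<theta> has_real_derivative t) (at s)"
    and f: "(f has_real_derivative f') (at (\<theta> s))" and g: "(g has_real_derivative g') (at (\<theta> s))"
  shows "((\<lambda>x. f (\<theta> x) *\<^sub>R q x + g (\<theta> x) *\<^sub>R h x) has_vector_derivative
    (f (\<theta> s) *\<^sub>R P + (f' * t) *\<^sub>R q s) + (g (\<theta> s) *\<^sub>R H' + (g' * t) *\<^sub>R h s)) (at s)"
  using has_vector_derivative_add[OF has_vector_derivative_scaleR[OF DERIV_chain2[OF f th] q]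
      has_vector_derivative_scaleR[OF DERIV_chain2[OF g th] h]] .

lemma vd_transfer:
  assumes "open I" "s \<in> I" "\<And>x. x \<in> I \<Longrightarrow> G x = F x" "(G has_vector_derivative D) (at s)"
  shows "vector_derivative F (at s) = D"
  by (rule vector_derivative_at, rule has_vector_derivative_transform_within_open[OF assms(4,1,2)])
     (use assms(3) in auto)

theorem corollary5p4:
  fixes I :: "real set"
    and c q qs as :: "real \<Rightarrow> real^3"
    and R :: real
    and \<theta> \<kappa> s1 :: "real \<Rightarrow> real"
  assumes I: "open I" "I \<noteq> {}"
    and phi: "type_M1_minus I c q"
    and dev: "developable_on I c q"
    and orient: "\<forall>s\<in>I. minner (vector_derivative c (at s)) (q s) < 0"
    and s1: "\<forall>s\<in>I. (s1 has_real_derivative mnorm (vector_derivative q (at s))) (at s)"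
    and frenet_h: "\<forall>s\<in>I. (central_normal q has_vector_derivative
                      deriv s1 s *\<^sub>R (q s + \<kappa> s *\<^sub>R asymptotic_normal q s)) (at s)"
    and frenet_a: "\<forall>s\<in>I. (asymptotic_normal q has_vector_derivative
                      deriv s1 s *\<^sub>R (- (\<kappa> s *\<^sub>R central_normal q s))) (at s)"
    and theta: "\<forall>s\<in>I. \<theta> differentiable (at s)"
    and types:
      "(\<forall>s\<in>I. qs s = sinh (\<theta> s) *\<^sub>R q s + cosh (\<theta> s) *\<^sub>R central_normal q s \<and>
               as s = cosh (\<theta> s) *\<^sub>R q s + sinh (\<theta> s) *\<^sub>R central_normal q s)
     \<or> (\<forall>s\<in>I. qs s = cosh (\<theta> s) *\<^sub>R q s + sinh (\<theta> s) *\<^sub>R central_normal q s \<and>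
               as s = sinh (\<theta> s) *\<^sub>R q s + cosh (\<theta> s) *\<^sub>R central_normal q s)"
    and mannheim: "\<forall>s\<in>I. central_normal qs s = asymptotic_normal q s"
    and as_nonnull: "\<forall>s\<in>I. minner (vector_derivative as (at s)) (vector_derivative as (at s)) \<noteq> 0"
  shows
    "\<not> developable_on I (\<lambda>s. c s + R *\<^sub>R asymptotic_normal q s) (central_normal qs) \<and>
     ((\<forall>s\<in>I. qs s = sinh (\<theta> s) *\<^sub>R q s + cosh (\<theta> s) *\<^sub>R central_normal q s \<and>
               as s = cosh (\<theta> s) *\<^sub>R q s + sinh (\<theta> s) *\<^sub>R central_normal q s) \<longrightarrow>
       (developable_on I (\<lambda>s. c s + R *\<^sub>R asymptotic_normal q s) as \<longleftrightarrow>
         (\<forall>s\<in>I. sinh (\<theta> s) + R * deriv s1 s * \<kappa> s * cosh (\<theta> s) = 0))) \<and>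
     ((\<forall>s\<in>I. qs s = cosh (\<theta> s) *\<^sub>R q s + sinh (\<theta> s) *\<^sub>R central_normal q s \<and>
               as s = sinh (\<theta> s) *\<^sub>R q s + cosh (\<theta> s) *\<^sub>R central_normal q s) \<longrightarrow>
       (developable_on I (\<lambda>s. c s + R *\<^sub>R asymptotic_normal q s) as \<longleftrightarrow>
         (\<forall>s\<in>I. cosh (\<theta> s) + R * deriv s1 s * \<kappa> s * sinh (\<theta> s) = 0)))"
  proof -
  let ?Pp = "\<forall>s\<in>I. qs s = sinh (\<theta> s) *\<^sub>R q s + cosh (\<theta> s) *\<^sub>R central_normal q s \<and>
               as s = cosh (\<theta> s) *\<^sub>R q s + sinh (\<theta> s) *\<^sub>R central_normal q s"
  let ?Pm = "\<forall>s\<in>I. qs s = cosh (\<theta> s) *\<^sub>R q s + sinh (\<theta> s) *\<^sub>R central_normal q s \<and>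
               as s = sinh (\<theta> s) *\<^sub>R q s + cosh (\<theta> s) *\<^sub>R central_normal q s"
  let ?b = "\<lambda>s. c s + R *\<^sub>R asymptotic_normal q s"
  have pt: "dparam ?b (central_normal qs) s \<noteq> 0 \<and>
     (?Pp \<longrightarrow> (dparam ?b as s = 0 \<longleftrightarrow> sinh (\<theta> s) + R * deriv s1 s * \<kappa> s * cosh (\<theta> s) = 0)) \<and>
     (?Pm \<longrightarrow> (dparam ?b as s = 0 \<longleftrightarrow> cosh (\<theta> s) + R * deriv s1 s * \<kappa> s * sinh (\<theta> s) = 0))"
    if sI: "s \<in> I" for s
  proof -
    define Q where "Q = q s"
    define P where "P = vector_derivative q (at s)"
    define m where "m = mnorm P"
    define H where "H = central_normal q s"
    define A where "A = asymptotic_normal q s"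
    define C where "C = vector_derivative c (at s)"
    define k where "k = \<kappa> s"
    define D where "D = deriv s1 s"
    define t where "t = deriv \<theta> s"
    have rs: "c differentiable (at s)" "q differentiable (at s)"
      "minner P P \<noteq> 0" "minner P C = 0" "mnorm C = 1"
      using phi sI unfolding type_M1_minus_def ruled_surface_def P_def C_def by auto
    have QQ: "minner Q Q = -1" and HHp: "minner H H > 0"
      using phi sI unfolding type_M1_minus_def Q_def H_def by auto
    have m0: "m > 0" using rs(3) unfolding m_def mnorm_def by simp
    have Hdef: "H = (1/m) *\<^sub>R P" unfolding H_def central_normal_def m_def P_def ..
    have PH: "P = m *\<^sub>R H" using m0 unfolding Hdef by simp
    have mm: "m * m = \<bar>minner P P\<bar>" unfolding m_def mnorm_def by simp
    have "minner H H = minner P P / (m*m)" unfolding Hdef by simp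
    with HHp m0 have "minner P P > 0"
      by (smt (verit, ccfv_SIG) divide_pos_pos mult_pos_pos zero_less_divide_iff)
    with mm m0 have HH: "minner H H = 1"
      using \<open>minner H H = minner P P / (m*m)\<close> by simp
    have qd: "(q has_vector_derivative P) (at s)"
      using rs(2) vector_derivative_works P_def by blast
    have QP: "minner Q P = 0"
    proof -
      have d1: "((\<lambda>t. minner (q t) (q t)) has_real_derivative 2 * minner Q P) (at s)"
        using minner_deriv[OF qd] Q_def by simp
      have "((\<lambda>t. -1::real) has_real_derivative 2 * minner Q P) (at s)"
        by (rule has_field_derivative_transform_within_open[OF d1 I(1) sI])
           (use phi in \<open>auto simp: type_M1_minus_def\<close>)
      moreover have "((\<lambda>t. -1::real) has_real_derivative 0) (at s)" by simp
      ultimately show ?thesis using DERIV_unique by fastforce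
    qed
    have QH: "minner Q H = 0" using QP unfolding PH using m0 by simp
    have "A = (1/m) *\<^sub>R lcross P Q" unfolding A_def asymptotic_normal_def P_def m_def Q_def ..
    also have "\<dots> = lcross H Q" using m0 by (subst PH) (simp add: lcross_scaleR)
    finally have Adef: "A = lcross H Q" .
    note fr = frame[OF QQ HH QH, folded Adef]
    note gr = gram[OF QQ HH QH fr(1,2,3)]
    have Dm: "D = m" unfolding D_def m_def P_def using s1 sI by (simp add: DERIV_imp_deriv)
    have hd: "(central_normal q has_vector_derivative m *\<^sub>R (Q + k *\<^sub>R A)) (at s)"
      using frenet_h[rule_format, OF sI] Dm unfolding D_def Q_def k_def A_def by simp
    have ad: "(asymptotic_normal q has_vector_derivative m *\<^sub>R (- (k *\<^sub>R H))) (at s)"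
      using frenet_a[rule_format, OF sI] Dm unfolding D_def H_def k_def by simp
    have td: "(\<theta> has_real_derivative t) (at s)"
      unfolding t_def using theta sI DERIV_deriv_iff_real_differentiable by blast
    have CQ: "C = Q"
    proof -
      define \<alpha> where "\<alpha> = - minner C Q"
      define \<gamma> where "\<gamma> = minner C A"
      have CH: "minner C H = 0" using rs(4) unfolding PH using m0 by (simp add: minner_sym)
      have Cexp: "C = \<alpha> *\<^sub>R Q + 0 *\<^sub>R H + \<gamma> *\<^sub>R A"
        using expand[OF QQ HH QH, of C] CH unfolding \<alpha>_def \<gamma>_def Adef by simp
      have "dparam c q s = 0" using dev sI unfolding developable_on_def by auto
      hence "det3 C Q P = 0" using rs(3) unfolding dparam_def C_def[symmetric] P_def[symmetric] Q_def by simp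
      hence "m * det3 C Q H = 0" unfolding PH det3_formula by (simp add: algebra_simps)
      hence "det3 C Q H = 0" using m0 by simp
      moreover have "det3 C Q H = det3 (\<alpha> *\<^sub>R Q + 0 *\<^sub>R H + \<gamma> *\<^sub>R A) (1 *\<^sub>R Q + 0 *\<^sub>R H + 0 *\<^sub>R A) (0 *\<^sub>R Q + 1 *\<^sub>R H + 0 *\<^sub>R A)"
        using Cexp by simp
      ultimately have "\<gamma> = 0" unfolding det3_lin using fr(4) by simp
      hence C2: "C = \<alpha> *\<^sub>R Q" using Cexp by simp
      have "\<alpha> > 0" using orient sI unfolding \<alpha>_def C_def Q_def by simp
      moreover have "mnorm C = \<bar>\<alpha>\<bar>" unfolding C2 mnorm_def using QQ by simp
      ultimately have "\<alpha> = 1" using rs(5) by simp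
      thus ?thesis using C2 by simp
    qed
    have cd: "(c has_vector_derivative Q) (at s)"
      using rs(1) vector_derivative_works CQ C_def by metis
    have bd: "(?b has_vector_derivative (1 *\<^sub>R Q + (- R * m * k) *\<^sub>R H + 0 *\<^sub>R A)) (at s)"
    proof -
      have "(?b has_vector_derivative (Q + (R *\<^sub>R (m *\<^sub>R (- (k *\<^sub>R H))) + 0 *\<^sub>R asymptotic_normal q s))) (at s)"
        by (rule has_vector_derivative_add[OF cd has_vector_derivative_scaleR[OF DERIV_const ad]])
      thus ?thesis by (simp add: algebra_simps)
    qed
    have bvd: "vector_derivative ?b (at s) = 1 *\<^sub>R Q + (- R * m * k) *\<^sub>R H + 0 *\<^sub>R A"
      using bd by (rule vector_derivative_at)
    have qsP: "t = - m \<and> m * k \<noteq> 0" if Pp: ?Pp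
    proof -
      have "(qs has_vector_derivative (sinh (\<theta> s) *\<^sub>R P + (cosh (\<theta> s) * t) *\<^sub>R Q) + (cosh (\<theta> s) *\<^sub>R (m *\<^sub>R (Q + k *\<^sub>R A)) + (sinh (\<theta> s) * t) *\<^sub>R H)) (at s)"
        using has_vector_derivative_transform_within_open[OF comb_deriv[OF qd hd td has_field_derivative_sinh[OF DERIV_ident] has_field_derivative_cosh[OF DERIV_ident]] I(1) sI] Pp
        unfolding Q_def H_def by auto
      hence "vector_derivative qs (at s) = (cosh (\<theta> s) * (t + m)) *\<^sub>R Q + (sinh (\<theta> s) * (t + m)) *\<^sub>R H + (cosh (\<theta> s) * m * k) *\<^sub>R A"
        unfolding PH by (simp add: vector_derivative_at algebra_simps)
      moreover have "central_normal qs s = A" using mannheim sI A_def by simp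
      ultimately have eq: "A = (1 / mnorm (vector_derivative qs (at s))) *\<^sub>R ((cosh (\<theta> s) * (t + m)) *\<^sub>R Q + (sinh (\<theta> s) * (t + m)) *\<^sub>R H + (cosh (\<theta> s) * m * k) *\<^sub>R A)"
        unfolding central_normal_def by simp
      have e1: "1 = (1 / mnorm (vector_derivative qs (at s))) * (cosh (\<theta> s) * m * k)"
        using arg_cong[OF eq, of "\<lambda>x. minner x A"] fr(1) by (simp only: minner_scaleR gr(3))
      have e2: "0 = (1 / mnorm (vector_derivative qs (at s))) * (- (cosh (\<theta> s) * (t + m)))"
        using arg_cong[OF eq, of "\<lambda>x. minner x Q"] fr(2) by (simp only: minner_scaleR gr(1))
      from e1 have "cosh (\<theta> s) * m * k \<noteq> 0" by (metis mult_zero_right zero_neq_one)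
      hence "m * k \<noteq> 0" by auto
      moreover from e1 e2 have "t = - m" by (smt (verit) cosh_real_pos mult_eq_0_iff mult_zero_left)
      ultimately show ?thesis by simp
    qed
    have qsM: "t = - m \<and> m * k \<noteq> 0" if Pm: ?Pm
    proof -
      have "(qs has_vector_derivative (cosh (\<theta> s) *\<^sub>R P + (sinh (\<theta> s) * t) *\<^sub>R Q) + (sinh (\<theta> s) *\<^sub>R (m *\<^sub>R (Q + k *\<^sub>R A)) + (cosh (\<theta> s) * t) *\<^sub>R H)) (at s)"
        using has_vector_derivative_transform_within_open[OF comb_deriv[OF qd hd td has_field_derivative_cosh[OF DERIV_ident] has_field_derivative_sinh[OF DERIV_ident]] I(1) sI] Pm
        unfolding Q_def H_def by auto
      hence "vector_derivative qs (at s) = (sinh (\<theta> s) * (t + m)) *\<^sub>R Q + (cosh (\<theta> s) * (t + m)) *\<^sub>R H + (sinh (\<theta> s) * m * k) *\<^sub>R A"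
        unfolding PH by (simp add: vector_derivative_at algebra_simps)
      moreover have "central_normal qs s = A" using mannheim sI A_def by simp
      ultimately have eq: "A = (1 / mnorm (vector_derivative qs (at s))) *\<^sub>R ((sinh (\<theta> s) * (t + m)) *\<^sub>R Q + (cosh (\<theta> s) * (t + m)) *\<^sub>R H + (sinh (\<theta> s) * m * k) *\<^sub>R A)"
        unfolding central_normal_def by simp
      have e1: "1 = (1 / mnorm (vector_derivative qs (at s))) * (sinh (\<theta> s) * m * k)"
        using arg_cong[OF eq, of "\<lambda>x. minner x A"] fr(1) by (simp only: minner_scaleR gr(3))
      have e2: "0 = (1 / mnorm (vector_derivative qs (at s))) * (cosh (\<theta> s) * (t + m))"
        using arg_cong[OF eq, of "\<lambda>x. minner x H"] fr(3) by (simp only: minner_scaleR gr(2))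
      from e1 have "sinh (\<theta> s) * m * k \<noteq> 0" by (metis mult_zero_right zero_neq_one)
      hence "m * k \<noteq> 0" by auto
      moreover from e1 e2 have "t = - m" by (smt (verit) cosh_real_pos mult_eq_0_iff mult_zero_left)
      ultimately show ?thesis by simp
    qed
    have mk: "m * k \<noteq> 0" using types qsP qsM by blast
    have pa: "dparam ?b (central_normal qs) s \<noteq> 0"
    proof -
      have "vector_derivative (central_normal qs) (at s) = m *\<^sub>R (- (k *\<^sub>R H))"
        by (rule vd_transfer[OF I(1) sI _ ad]) (use mannheim in auto)
      hence ed: "vector_derivative (central_normal qs) (at s) = 0 *\<^sub>R Q + (- m * k) *\<^sub>R H + 0 *\<^sub>R A"
        by simp
      have es: "central_normal qs s = 0 *\<^sub>R Q + 0 *\<^sub>R H + 1 *\<^sub>R A" using mannheim sI A_def by simp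
      have num: "det3 (vector_derivative ?b (at s)) (central_normal qs s) (vector_derivative (central_normal qs) (at s)) = m * k"
        unfolding bvd es ed det3_lin fr(4) by (simp add: algebra_simps)
      have den: "minner (vector_derivative (central_normal qs) (at s)) (vector_derivative (central_normal qs) (at s)) = (m*k)*(m*k)"
        unfolding ed using HH by (simp add: algebra_simps)
      show ?thesis unfolding dparam_def num den using mk by simp
    qed
    have pbP: "dparam ?b as s = 0 \<longleftrightarrow> sinh (\<theta> s) + R * deriv s1 s * \<kappa> s * cosh (\<theta> s) = 0" if Pp: ?Pp
    proof -
      have tm: "t = - m" using qsP[OF Pp] by simp
      have "(as has_vector_derivative (cosh (\<theta> s) *\<^sub>R P + (sinh (\<theta> s) * t) *\<^sub>R Q) + (sinh (\<theta> s) *\<^sub>R (m *\<^sub>R (Q + k *\<^sub>R A)) + (cosh (\<theta> s) * t) *\<^sub>R H)) (at s)"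
        using has_vector_derivative_transform_within_open[OF comb_deriv[OF qd hd td has_field_derivative_cosh[OF DERIV_ident] has_field_derivative_sinh[OF DERIV_ident]] I(1) sI] Pp
        unfolding Q_def H_def by auto
      hence ed: "vector_derivative as (at s) = 0 *\<^sub>R Q + 0 *\<^sub>R H + (sinh (\<theta> s) * m * k) *\<^sub>R A"
        unfolding PH tm by (simp add: vector_derivative_at algebra_simps)
      have es: "as s = cosh (\<theta> s) *\<^sub>R Q + sinh (\<theta> s) *\<^sub>R H + 0 *\<^sub>R A" using Pp sI Q_def H_def by simp
      have num: "det3 (vector_derivative ?b (at s)) (as s) (vector_derivative as (at s)) = (sinh (\<theta> s) * m * k) * (sinh (\<theta> s) + R * m * k * cosh (\<theta> s))"
        unfolding bvd es ed det3_lin fr(4) by (simp add: algebra_simps)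
      have den: "minner (vector_derivative as (at s)) (vector_derivative as (at s)) = (sinh (\<theta> s) * m * k) * (sinh (\<theta> s) * m * k)"
        unfolding ed using fr(1) by (simp add: algebra_simps)
      have nz: "sinh (\<theta> s) * m * k \<noteq> 0" using as_nonnull sI den by auto
      show ?thesis unfolding dparam_def num den using nz Dm D_def k_def by auto
    qed
    have pbM: "dparam ?b as s = 0 \<longleftrightarrow> cosh (\<theta> s) + R * deriv s1 s * \<kappa> s * sinh (\<theta> s) = 0" if Pm: ?Pm
    proof -
      have tm: "t = - m" using qsM[OF Pm] by simp
      have "(as has_vector_derivative (sinh (\<theta> s) *\<^sub>R P + (cosh (\<theta> s) * t) *\<^sub>R Q) + (cosh (\<theta> s) *\<^sub>R (m *\<^sub>R (Q + k *\<^sub>R A)) + (sinh (\<theta> s) * t) *\<^sub>R H)) (at s)"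
        using has_vector_derivative_transform_within_open[OF comb_deriv[OF qd hd td has_field_derivative_sinh[OF DERIV_ident] has_field_derivative_cosh[OF DERIV_ident]] I(1) sI] Pm
        unfolding Q_def H_def by auto
      hence ed: "vector_derivative as (at s) = 0 *\<^sub>R Q + 0 *\<^sub>R H + (cosh (\<theta> s) * m * k) *\<^sub>R A"
        unfolding PH tm by (simp add: vector_derivative_at algebra_simps)
      have es: "as s = sinh (\<theta> s) *\<^sub>R Q + cosh (\<theta> s) *\<^sub>R H + 0 *\<^sub>R A" using Pm sI Q_def H_def by simp
      have num: "det3 (vector_derivative ?b (at s)) (as s) (vector_derivative as (at s)) = (cosh (\<theta> s) * m * k) * (cosh (\<theta> s) + R * m * k * sinh (\<theta> s))"
        unfolding bvd es ed det3_lin fr(4) by (simp add: algebra_simps)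
      have den: "minner (vector_derivative as (at s)) (vector_derivative as (at s)) = (cosh (\<theta> s) * m * k) * (cosh (\<theta> s) * m * k)"
        unfolding ed using fr(1) by (simp add: algebra_simps)
      have nz: "cosh (\<theta> s) * m * k \<noteq> 0" using mk by simp
      show ?thesis unfolding dparam_def num den using nz Dm D_def k_def by auto
    qed
    show ?thesis using pa pbP pbM by blast
  qed
  obtain s0 where "s0 \<in> I" using I(2) by blast
  show ?thesis unfolding developable_on_def using pt \<open>s0 \<in> I\<close> by blast
qed

end
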